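(* Consider two patches with $p=d_{12}$, $q=d_{21}$, $0<p,q<1$, in an environment alternating deterministically $e_1,e_2,e_1,e_2,\dots$ starting with $e_1$ at generation $0$. Write $M_1=m_1(e_1)$, $M_2=m_1(e_2)$, $m_1=m_2(e_1)$, $m_2=m_2(e_2)$, all positive and finite, and assume the offspring laws are not such that every individual has exactly one offspring almost surely. Then the metapopulation persists with positive probability if and only if $$ M_1M_2(1-p)^2+(M_1m_2+m_1M_2)pq+m_1m_2(1-q)^2>\min\big(2,\;1+M_1M_2m_1m_2(1-p-q)^2\big). $$
   Context: Model with environment: at each generation the environment is in a state $w$; every individual living in patch $i$ independently produces a random number of offspring with mean $m_i(w)$ (depending on the current environment state), and each offspring independently moves from patch $i$ to patch $j$ with probability $d_{ij}$ (dispersal does not depend on the environment). Here $d_{11}=1-p$, $d_{12}=p$, $d_{21}=q$, $d_{22}=1-q$. Persistence with positive probability means the total population is nonzero at all generations with positive probability (starting from one individual in either patch). *)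

theory Defs
  imports "HOL-Probability.Probability"
begin

text \<open>A population state is a pair (a,b):
  a individuals in patch 1 and b individuals in patch 2.\<close>

definition padd :: "nat \<times> nat \<Rightarrow> nat \<times> nat \<Rightarrow> nat \<times> nat" where
  "padd x y = (fst x + fst y, snd x + snd y)"

fun iid_sum :: "nat \<Rightarrow> (nat \<times> nat) pmf \<Rightarrow> (nat \<times> nat) pmf" where
  "iid_sum 0 D = return_pmf (0, 0)"
| "iid_sum (Suc k) D = bind_pmf D (\<lambda>x. bind_pmf (iid_sum k D) (\<lambda>y. return_pmf (padd x y)))"

text \<open>Offspring vector of one individual living in patch i (i = 1 or 2) whose number of
  offspring has law L: each offspring independently moves to the other patch with
  probability r (r = p = d12 for patch 1, r = q = d21 for patch 2).\<close>
definition offspring_vec :: "nat \<Rightarrow> nat pmf \<Rightarrow> real \<Rightarrow> (nat \<times> nat) pmf" where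
  "offspring_vec i L r =
     bind_pmf L (\<lambda>N. bind_pmf (binomial_pmf N r) (\<lambda>k.
        return_pmf (if i = 1 then (N - k, k) else (k, N - k))))"

text \<open>One generation in environment w; L i w is the offspring law in patch i under w.\<close>
definition gen_step :: "(nat \<Rightarrow> 'w \<Rightarrow> nat pmf) \<Rightarrow> real \<Rightarrow> real \<Rightarrow> 'w
    \<Rightarrow> nat \<times> nat \<Rightarrow> (nat \<times> nat) pmf" where
  "gen_step L p q w z =
     bind_pmf (iid_sum (fst z) (offspring_vec 1 (L 1 w) p)) (\<lambda>x.
     bind_pmf (iid_sum (snd z) (offspring_vec 2 (L 2 w) q)) (\<lambda>y.
       return_pmf (padd x y)))"

fun popZ :: "(nat \<Rightarrow> 'w \<Rightarrow> nat pmf) \<Rightarrow> real \<Rightarrow> real \<Rightarrow> (nat \<Rightarrow> 'w)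
    \<Rightarrow> nat \<times> nat \<Rightarrow> nat \<Rightarrow> (nat \<times> nat) pmf" where
  "popZ L p q env z0 0 = return_pmf z0"
| "popZ L p q env z0 (Suc n) = bind_pmf (popZ L p q env z0 n) (gen_step L p q (env n))"

text \<open>Persistence with positive probability: since extinction is absorbing, the events
  {Z_n \<noteq> 0} decrease in n, so P(Z_n \<noteq> 0 for all n) = inf_n P(Z_n \<noteq> 0); persistence
  with positive probability means this infimum is positive.\<close>
definition persists :: "(nat \<Rightarrow> 'w \<Rightarrow> nat pmf) \<Rightarrow> real \<Rightarrow> real \<Rightarrow> (nat \<Rightarrow> 'w)
    \<Rightarrow> nat \<times> nat \<Rightarrow> bool" where
  "persists L p q env z0 \<longleftrightarrow>
     (\<exists>c>0. \<forall>n. measure_pmf.prob (popZ L p q env z0 n) {z. z \<noteq> (0, 0)} \<ge> c)"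

definition pmf_mean :: "nat pmf \<Rightarrow> real" where
  "pmf_mean L = measure_pmf.expectation L real"

end

theory Submission
  imports Defs
begin

lemma exp_bind:
  fixes f :: "'b \<Rightarrow> real"
  assumes nn: "\<And>x. 0 \<le> f x" and bd: "\<And>x. f x \<le> B"
  shows "measure_pmf.expectation (bind_pmf M N) f = measure_pmf.expectation M (\<lambda>x. measure_pmf.expectation (N x) f)"
proof -
  have int: "\<And>P::'b pmf. integrable (measure_pmf P) f"
    by (rule measure_pmf.integrable_const_bound[where B=B]) (use nn bd in \<open>auto\<close>)
  have nn2: "\<And>x. 0 \<le> measure_pmf.expectation (N x) f" by (simp add: integral_nonneg nn)
  have bd2: "\<And>x. measure_pmf.expectation (N x) f \<le> B"
    using measure_pmf.integral_le_const[of _ f B] bd int by (metis AE_I2)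
  have int2: "integrable (measure_pmf M) (\<lambda>x. measure_pmf.expectation (N x) f)"
    by (rule measure_pmf.integrable_const_bound[where B=B]) (use nn2 bd2 in \<open>auto\<close>)
  have "ennreal (measure_pmf.expectation (bind_pmf M N) f) = (\<integral>\<^sup>+x. f x \<partial>bind_pmf M N)"
    by (rule nn_integral_eq_integral[symmetric]) (use int nn in auto)
  also have "\<dots> = (\<integral>\<^sup>+x. \<integral>\<^sup>+y. f y \<partial>N x \<partial>M)" by simp
  also have "\<dots> = (\<integral>\<^sup>+x. ennreal (measure_pmf.expectation (N x) f) \<partial>M)"
    by (intro nn_integral_cong nn_integral_eq_integral) (use int nn in auto)
  also have "\<dots> = ennreal (measure_pmf.expectation M (\<lambda>x. measure_pmf.expectation (N x) f))"
    by (rule nn_integral_eq_integral) (use int2 nn2 in auto)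
  finally show ?thesis using nn2 by (simp add: integral_nonneg nn)
qed

definition pg :: "(nat \<times> nat) pmf \<Rightarrow> real \<Rightarrow> real \<Rightarrow> real" where
  "pg D s1 s2 = measure_pmf.expectation D (\<lambda>z. s1 ^ fst z * s2 ^ snd z)"

definition gf :: "nat pmf \<Rightarrow> real \<Rightarrow> real" where
  "gf L x = measure_pmf.expectation L (\<lambda>N. x ^ N)"

lemma pow_bd: "0 \<le> (s::real) \<Longrightarrow> s \<le> 1 \<Longrightarrow> s ^ n \<le> 1"
  by (simp add: power_le_one)

lemma pg_nonneg: "0 \<le> s1 \<Longrightarrow> 0 \<le> s2 \<Longrightarrow> 0 \<le> pg D s1 s2"
  unfolding pg_def by (simp add: integral_nonneg)

lemma pg_le1: assumes "0 \<le> s1" "s1 \<le> 1" "0 \<le> s2" "s2 \<le> 1" shows "pg D s1 s2 \<le> 1"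
proof -
  have int: "integrable (measure_pmf D) (\<lambda>z. s1 ^ fst z * s2 ^ snd z)"
    by (rule measure_pmf.integrable_const_bound[where B=1]) (use assms in \<open>auto simp: power_le_one mult_le_one\<close>)
  show ?thesis unfolding pg_def
    using measure_pmf.integral_le_const[OF int, of 1] assms by (auto simp: power_le_one mult_le_one)
qed

lemma pg_return[simp]: "pg (return_pmf z) s1 s2 = s1 ^ fst z * s2 ^ snd z"
  unfolding pg_def by simp

lemma pg_bind: assumes "0 \<le> s1" "s1 \<le> 1" "0 \<le> s2" "s2 \<le> 1"
  shows "pg (bind_pmf M N) s1 s2 = measure_pmf.expectation M (\<lambda>x. pg (N x) s1 s2)"
  unfolding pg_def
  by (rule exp_bind[where B=1]) (use assms in \<open>auto simp: power_le_one mult_le_one\<close>)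

lemma gf_nonneg: "0 \<le> (x::real) \<Longrightarrow> 0 \<le> gf L x"
  unfolding gf_def by (simp add: integral_nonneg)

lemma gf_int: fixes x :: real assumes "0 \<le> x" "x \<le> 1" shows "integrable (measure_pmf L) (\<lambda>N. x ^ N)"
  using measure_pmf.integrable_const_bound[where M=L and f="\<lambda>N. x ^ N" and B=1] assms by (auto simp: power_le_one)

lemma gf_le1: fixes x :: real assumes "0 \<le> x" "x \<le> 1" shows "gf L x \<le> 1"
proof -
  have int: "integrable (measure_pmf L) (\<lambda>N. x ^ N)" using gf_int assms .
  show ?thesis unfolding gf_def
    using measure_pmf.integral_le_const[OF int, of 1] assms by (auto simp: power_le_one)
qed


lemma gf_mono: fixes x :: real assumes "0 \<le> x" "x \<le> y" "y \<le> 1" shows "gf L x \<le> gf L y"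
  unfolding gf_def
  by (rule integral_mono) (use assms gf_int[of x] gf_int[of y] in \<open>auto intro: power_mono\<close>)

lemma gf_one[simp]: "gf L 1 = 1"
proof -
  have "measure_pmf.expectation L (\<lambda>N. (1::real) ^ N) = measure_pmf.expectation L (\<lambda>_. 1)"
    by (rule Bochner_Integration.integral_cong) auto
  then show ?thesis unfolding gf_def by (rule trans) simp
qed

lemma pg_iid_sum: assumes "0 \<le> s1" "s1 \<le> 1" "0 \<le> s2" "s2 \<le> 1"
  shows "pg (iid_sum k D) s1 s2 = (pg D s1 s2) ^ k"
proof (induction k)
  case 0 then show ?case by simp
next
  case (Suc k)
  have "pg (iid_sum (Suc k) D) s1 s2 = measure_pmf.expectation D (\<lambda>x. pg (iid_sum k D \<bind> (\<lambda>y. return_pmf (padd x y))) s1 s2)"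
    by (simp add: pg_bind assms)
  also have "\<dots> = measure_pmf.expectation D (\<lambda>x. (s1 ^ fst x * s2 ^ snd x) * pg (iid_sum k D) s1 s2)"
  proof (intro Bochner_Integration.integral_cong refl)
    fix x :: "nat \<times> nat"
    have "pg (iid_sum k D \<bind> (\<lambda>y. return_pmf (padd x y))) s1 s2
        = measure_pmf.expectation (iid_sum k D) (\<lambda>y. (s1 ^ fst x * s2 ^ snd x) * (s1 ^ fst y * s2 ^ snd y))"
      by (simp add: pg_bind assms padd_def power_add mult_ac)
    also have "\<dots> = (s1 ^ fst x * s2 ^ snd x) * pg (iid_sum k D) s1 s2"
      unfolding pg_def by (rule integral_mult_right_zero)
    finally show "pg (iid_sum k D \<bind> (\<lambda>y. return_pmf (padd x y))) s1 s2 = (s1 ^ fst x * s2 ^ snd x) * pg (iid_sum k D) s1 s2" .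
  qed
  also have "\<dots> = pg D s1 s2 * pg (iid_sum k D) s1 s2"
    unfolding pg_def by simp
  finally show ?case using Suc by simp
qed

lemma binom_exp:
  assumes "0 \<le> r" "r \<le> 1"
  shows "measure_pmf.expectation (binomial_pmf N r) (\<lambda>k. s1 ^ (N - k) * s2 ^ k) = ((1 - r) * s1 + r * s2) ^ N"
proof -
  have "measure_pmf.expectation (binomial_pmf N r) (\<lambda>k. s1 ^ (N - k) * s2 ^ k)
     = (\<Sum>k\<le>N. (real (N choose k) * r ^ k * (1 - r) ^ (N - k)) * (s1 ^ (N - k) * s2 ^ k))"
    using expectation_binomial_pmf'[of r N "\<lambda>k. s1 ^ (N - k) * s2 ^ k"] assms by simp
  also have "\<dots> = (\<Sum>k\<le>N. real (N choose k) * (r * s2) ^ k * ((1 - r) * s1) ^ (N - k))"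
    by (intro sum.cong refl) (simp add: power_mult_distrib mult_ac)
  also have "\<dots> = (r * s2 + (1 - r) * s1) ^ N" by (rule binomial_ring[symmetric])
  finally show ?thesis by (simp add: add.commute)
qed

lemma cvx01: fixes a x y :: real assumes "0 \<le> a" "a \<le> 1" "0 \<le> x" "x \<le> 1" "0 \<le> y" "y \<le> 1"
  shows "0 \<le> (1 - a) * x + a * y" "(1 - a) * x + a * y \<le> 1"
proof -
  show "0 \<le> (1 - a) * x + a * y" using assms by simp
  have "(1 - a) * x + a * y \<le> (1 - a) * 1 + a * 1"
    using assms by (intro add_mono mult_left_mono) auto
  then show "(1 - a) * x + a * y \<le> 1" by simp
qed

lemma pg_offspring1:
  assumes "0 \<le> r" "r \<le> 1" "0 \<le> s1" "s1 \<le> 1" "0 \<le> s2" "s2 \<le> 1"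
  shows "pg (offspring_vec 1 L r) s1 s2 = gf L ((1 - r) * s1 + r * s2)"
proof -
  have "pg (offspring_vec 1 L r) s1 s2 = measure_pmf.expectation L (\<lambda>N. pg (binomial_pmf N r \<bind> (\<lambda>k. return_pmf (N - k, k))) s1 s2)"
    unfolding offspring_vec_def by (simp add: pg_bind assms)
  also have "\<dots> = measure_pmf.expectation L (\<lambda>N. ((1 - r) * s1 + r * s2) ^ N)"
    by (intro Bochner_Integration.integral_cong refl) (simp add: pg_bind assms binom_exp)
  finally show ?thesis unfolding gf_def .
qed

lemma pg_offspring2:
  assumes "0 \<le> r" "r \<le> 1" "0 \<le> s1" "s1 \<le> 1" "0 \<le> s2" "s2 \<le> 1"
  shows "pg (offspring_vec 2 L r) s1 s2 = gf L (r * s1 + (1 - r) * s2)"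
proof -
  have "pg (offspring_vec 2 L r) s1 s2 = measure_pmf.expectation L (\<lambda>N. pg (binomial_pmf N r \<bind> (\<lambda>k. return_pmf (k, N - k))) s1 s2)"
    unfolding offspring_vec_def by (simp add: pg_bind assms)
  also have "\<dots> = measure_pmf.expectation L (\<lambda>N. ((1 - r) * s2 + r * s1) ^ N)"
  proof (intro Bochner_Integration.integral_cong refl)
    fix N
    have e: "measure_pmf.expectation (binomial_pmf N r) (\<lambda>k. s1 ^ k * s2 ^ (N - k)) = ((1 - r) * s2 + r * s1) ^ N"
      using binom_exp[of r N s2 s1] assms by (simp add: mult.commute)
    show "pg (binomial_pmf N r \<bind> (\<lambda>k. return_pmf (k, N - k))) s1 s2 = ((1 - r) * s2 + r * s1) ^ N"
      using e by (simp add: pg_bind assms)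
  qed
  finally show ?thesis unfolding gf_def by (simp add: add.commute)
qed

definition hv :: "(nat \<Rightarrow> 'w \<Rightarrow> nat pmf) \<Rightarrow> real \<Rightarrow> real \<Rightarrow> 'w \<Rightarrow> real \<times> real \<Rightarrow> real \<times> real" where
  "hv L p q w s = (gf (L 1 w) ((1 - p) * fst s + p * snd s), gf (L 2 w) (q * fst s + (1 - q) * snd s))"

definition in01 :: "real \<times> real \<Rightarrow> bool" where
  "in01 s \<longleftrightarrow> 0 \<le> fst s \<and> fst s \<le> 1 \<and> 0 \<le> snd s \<and> snd s \<le> 1"

lemma hv_in01: assumes "0 \<le> p" "p \<le> 1" "0 \<le> q" "q \<le> 1" "in01 s" shows "in01 (hv L p q w s)"
proof -
  have a: "0 \<le> (1 - p) * fst s + p * snd s" "(1 - p) * fst s + p * snd s \<le> 1"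
    using cvx01[of p "fst s" "snd s"] assms unfolding in01_def by auto
  have b: "0 \<le> q * fst s + (1 - q) * snd s" "q * fst s + (1 - q) * snd s \<le> 1"
    using cvx01[of "1 - q" "fst s" "snd s"] assms unfolding in01_def by auto
  show ?thesis unfolding in01_def hv_def using a b by (auto intro: gf_nonneg gf_le1)
qed

fun Hn :: "(nat \<Rightarrow> 'w \<Rightarrow> nat pmf) \<Rightarrow> real \<Rightarrow> real \<Rightarrow> (nat \<Rightarrow> 'w) \<Rightarrow> nat \<Rightarrow> real \<times> real \<Rightarrow> real \<times> real" where
  "Hn L p q env 0 s = s"
| "Hn L p q env (Suc n) s = Hn L p q env n (hv L p q (env n) s)"

lemma Hn_in01: assumes "0 \<le> p" "p \<le> 1" "0 \<le> q" "q \<le> 1" "in01 s" shows "in01 (Hn L p q env n s)"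
  using assms(5)
proof (induction n arbitrary: s)
  case (Suc n)
  show ?case using Suc.IH[OF hv_in01[OF assms(1-4) Suc.prems]] by simp
qed simp

lemma pg_gen_step:
  assumes "0 \<le> p" "p \<le> 1" "0 \<le> q" "q \<le> 1" "in01 s"
  shows "pg (gen_step L p q w z) (fst s) (snd s) = fst (hv L p q w s) ^ fst z * snd (hv L p q w s) ^ snd z"
proof -
  have s: "0 \<le> fst s" "fst s \<le> 1" "0 \<le> snd s" "snd s \<le> 1" using assms(5) unfolding in01_def by auto
  have "pg (gen_step L p q w z) (fst s) (snd s) =
     measure_pmf.expectation (iid_sum (fst z) (offspring_vec 1 (L 1 w) p)) (\<lambda>x.
       measure_pmf.expectation (iid_sum (snd z) (offspring_vec 2 (L 2 w) q)) (\<lambda>y.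
         (fst s ^ fst x * snd s ^ snd x) * (fst s ^ fst y * snd s ^ snd y)))"
    unfolding gen_step_def by (simp add: pg_bind s padd_def power_add mult_ac)
  also have "\<dots> = measure_pmf.expectation (iid_sum (fst z) (offspring_vec 1 (L 1 w) p)) (\<lambda>x.
       (fst s ^ fst x * snd s ^ snd x) * pg (iid_sum (snd z) (offspring_vec 2 (L 2 w) q)) (fst s) (snd s))"
    unfolding pg_def by (intro Bochner_Integration.integral_cong refl integral_mult_right_zero)
  also have "\<dots> = pg (iid_sum (fst z) (offspring_vec 1 (L 1 w) p)) (fst s) (snd s) * pg (iid_sum (snd z) (offspring_vec 2 (L 2 w) q)) (fst s) (snd s)"
    unfolding pg_def by (rule integral_mult_left_zero)
  also have "\<dots> = fst (hv L p q w s) ^ fst z * snd (hv L p q w s) ^ snd z"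
    by (simp only: pg_iid_sum[OF s] pg_offspring1[OF assms(1,2) s] pg_offspring2[OF assms(3,4) s] hv_def fst_conv snd_conv)
  finally show ?thesis .
qed

lemma pg_popZ:
  assumes "0 \<le> p" "p \<le> 1" "0 \<le> q" "q \<le> 1" "in01 s"
  shows "pg (popZ L p q env z0 n) (fst s) (snd s) = fst (Hn L p q env n s) ^ fst z0 * snd (Hn L p q env n s) ^ snd z0"
  using assms(5)
proof (induction n arbitrary: s)
  case 0 then show ?case by simp
next
  case (Suc n)
  have s: "0 \<le> fst s" "fst s \<le> 1" "0 \<le> snd s" "snd s \<le> 1" using Suc.prems unfolding in01_def by auto
  have "pg (popZ L p q env z0 (Suc n)) (fst s) (snd s) =
     measure_pmf.expectation (popZ L p q env z0 n) (\<lambda>z. pg (gen_step L p q (env n) z) (fst s) (snd s))"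
    by (simp add: pg_bind s)
  also have "\<dots> = measure_pmf.expectation (popZ L p q env z0 n) (\<lambda>z. fst (hv L p q (env n) s) ^ fst z * snd (hv L p q (env n) s) ^ snd z)"
    by (intro Bochner_Integration.integral_cong refl pg_gen_step assms Suc.prems)
  also have "\<dots> = pg (popZ L p q env z0 n) (fst (hv L p q (env n) s)) (snd (hv L p q (env n) s))"
    unfolding pg_def ..
  also have "\<dots> = fst (Hn L p q env (Suc n) s) ^ fst z0 * snd (Hn L p q env (Suc n) s) ^ snd z0"
    using Suc.IH[OF hv_in01[OF assms(1-4) Suc.prems]] by simp
  finally show ?case .
qed

lemma prob_nonzero: "measure_pmf.prob D {z. z \<noteq> (0, 0)} = 1 - pg D 0 0"
proof -
  have "pg D 0 0 = measure_pmf.expectation D (indicator {(0,0)})"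
    unfolding pg_def by (intro Bochner_Integration.integral_cong refl) (auto simp: indicator_def)
  also have "\<dots> = measure_pmf.prob D {(0,0)}" by simp
  finally have "pg D 0 0 = measure_pmf.prob D {(0,0)}" .
  moreover have "{z. z \<noteq> (0, 0)} = UNIV - {(0::nat,0::nat)}" by auto
  ultimately show ?thesis using measure_pmf.prob_compl[of "{(0::nat,0::nat)}" D] by simp
qed

lemma prob_popZ:
  assumes "0 \<le> p" "p \<le> 1" "0 \<le> q" "q \<le> 1"
  shows "measure_pmf.prob (popZ L p q env z0 n) {z. z \<noteq> (0, 0)} =
     1 - fst (Hn L p q env n (0,0)) ^ fst z0 * snd (Hn L p q env n (0,0)) ^ snd z0"
  using pg_popZ[OF assms, of "(0,0)"] prob_nonzero by (simp add: in01_def)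

lemma phi_bound:
  fixes y :: real assumes "0 \<le> y" "y \<le> 1"
  shows "(if 2 \<le> N then (1 - y)^2 else 0) \<le> real N * (1 - y) - (1 - y ^ N)"
proof (induction N)
  case 0 then show ?case by simp
next
  case (Suc N)
  have e: "real (Suc N) * (1 - y) - (1 - y ^ Suc N) = (real N * (1 - y) - (1 - y ^ N)) + (1 - y) * (1 - y ^ N)"
    by (simp add: algebra_simps)
  have p0: "0 \<le> (1 - y) * (1 - y ^ N)" using assms by (simp add: power_le_one)
  show ?case
  proof (cases "N = 0")
    case True then show ?thesis by simp
  next
    case False
    have "y ^ N \<le> y" using assms False by (simp add: power_le_one power_decreasing[of 1 N y, simplified])
    then have p1: "(1 - y)^2 \<le> (1 - y) * (1 - y ^ N)" using assms by (simp add: power2_eq_square mult_left_mono)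
    have "0 \<le> real N * (1 - y) - (1 - y ^ N)"
    proof (cases "2 \<le> N")
      case True
      have a: "(1 - y)^2 \<le> real N * (1 - y) - (1 - y ^ N)" using Suc.IH True by simp
      have b: "0 \<le> (1 - y)^2" by simp
      show ?thesis using a b by linarith
    next
      case False then show ?thesis using Suc.IH by simp
    qed
    then have g: "(1 - y)^2 \<le> real (Suc N) * (1 - y) - (1 - y ^ Suc N)" using e p1 by linarith
    have "2 \<le> Suc N" using False by simp
    then show ?thesis by (simp only: if_P) (rule g)
  qed
qed

lemma gf_gap:
  fixes y :: real
  assumes int: "integrable (measure_pmf L) real" and y: "0 \<le> y" "y \<le> 1"
  shows "measure_pmf.prob L {N. 2 \<le> N} * (1 - y)^2 \<le> pmf_mean L * (1 - y) - (1 - gf L y)"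
proof -
  have i1: "integrable (measure_pmf L) (\<lambda>N. real N * (1 - y))" using int by simp
  have i2: "integrable (measure_pmf L) (\<lambda>N. 1 - y ^ N)" using gf_int[OF y] by simp
  have "pmf_mean L * (1 - y) - (1 - gf L y) = measure_pmf.expectation L (\<lambda>N. real N * (1 - y) - (1 - y ^ N))"
    unfolding pmf_mean_def gf_def using i1 i2 gf_int[OF y]
    by (simp add: Bochner_Integration.integral_diff measure_pmf.prob_space)
  moreover have "measure_pmf.prob L {N. 2 \<le> N} * (1 - y)^2 = measure_pmf.expectation L (\<lambda>N. if 2 \<le> N then (1 - y)^2 else 0)"
  proof -
    have "measure_pmf.expectation L (\<lambda>N. if 2 \<le> N then (1 - y)^2 else 0) = measure_pmf.expectation L (\<lambda>N. indicator {N. 2 \<le> N} N * (1 - y)^2)"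
      by (intro Bochner_Integration.integral_cong) (auto simp: indicator_def)
    also have "\<dots> = measure_pmf.prob L {N. 2 \<le> N} * (1 - y)^2" by simp
    finally show ?thesis by simp
  qed
  moreover have "measure_pmf.expectation L (\<lambda>N. if 2 \<le> N then (1 - y)^2 else 0) \<le> measure_pmf.expectation L (\<lambda>N. real N * (1 - y) - (1 - y ^ N))"
    by (rule integral_mono) (use i1 i2 phi_bound[OF y] in \<open>auto intro!: measure_pmf.integrable_const_bound[where B="(1-y)^2"]\<close>)
  ultimately show ?thesis by simp
qed

lemma gf_cont:
  fixes x :: "nat \<Rightarrow> real"
  assumes "x \<longlonglongrightarrow> a" "\<And>n. 0 \<le> x n" "\<And>n. x n \<le> 1"
  shows "(\<lambda>n. gf L (x n)) \<longlonglongrightarrow> gf L a"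
  unfolding gf_def
proof (rule integral_dominated_convergence[where w="\<lambda>_. 1"])
  show "AE N in measure_pmf L. (\<lambda>n. x n ^ N) \<longlonglongrightarrow> a ^ N"
    using assms(1) by (auto intro!: tendsto_power)
  show "\<And>n. AE N in measure_pmf L. norm (x n ^ N) \<le> 1"
    using assms(2,3) by (auto simp: power_le_one)
qed simp_all

definition S :: "real \<Rightarrow> nat \<Rightarrow> real" where "S x N = (\<Sum>k<N. (1 - x) ^ k)"

lemma S_eq: "x * S x N = 1 - (1 - x) ^ N"
  unfolding S_def by (induction N) (simp_all add: algebra_simps)

lemma S_le: "0 \<le> x \<Longrightarrow> x \<le> 1 \<Longrightarrow> S x N \<le> real N"
proof -
  assume "0 \<le> x" "x \<le> 1"
  then have "S x N \<le> (\<Sum>k<N. 1)" unfolding S_def by (intro sum_mono) (simp add: power_le_one)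
  then show ?thesis by simp
qed

lemma S_nonneg: "0 \<le> x \<Longrightarrow> x \<le> 1 \<Longrightarrow> 0 \<le> S x N"
  unfolding S_def by (intro sum_nonneg) simp

lemma S_anti: "0 \<le> x \<Longrightarrow> x \<le> y \<Longrightarrow> y \<le> 1 \<Longrightarrow> S y N \<le> S x N"
  unfolding S_def by (intro sum_mono power_mono) auto

lemma S_lim: "(\<lambda>n. S (1 / (real n + 1)) N) \<longlonglongrightarrow> real N"
proof -
  have z: "(\<lambda>n. 1 / (real n + 1)) = (\<lambda>n. inverse (real (Suc n)))"
    by (simp add: inverse_eq_divide add.commute)
  have z0: "(\<lambda>n. 1 / (real n + 1)) \<longlonglongrightarrow> 0"
    unfolding z by (rule LIMSEQ_inverse_real_of_nat)
  have t: "(\<lambda>n. 1 - 1 / (real n + 1)) \<longlonglongrightarrow> 1 - 0"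
    by (intro tendsto_diff tendsto_const z0)
  have "(\<lambda>n. \<Sum>k<N. (1 - 1 / (real n + 1)) ^ k) \<longlonglongrightarrow> (\<Sum>k<N. 1 ^ k)"
    using t by (intro tendsto_sum tendsto_power) simp
  then show ?thesis unfolding S_def by simp
qed

lemma gf_near1:
  assumes int: "integrable (measure_pmf L) real" and m: "0 < pmf_mean L" and c: "c < 1"
  shows "\<exists>\<delta>>0. \<delta> \<le> 1 \<and> (\<forall>x. 0 < x \<and> x \<le> \<delta> \<longrightarrow> gf L (1 - x) \<le> 1 - c * pmf_mean L * x)"
proof -
  have lim: "(\<lambda>n. measure_pmf.expectation L (S (1 / (real n + 1)))) \<longlonglongrightarrow> measure_pmf.expectation L real"
  proof (rule integral_dominated_convergence[where w=real])
    show "AE N in measure_pmf L. (\<lambda>n. S (1 / (real n + 1)) N) \<longlonglongrightarrow> real N" by (simp add: S_lim)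
    show "\<And>n. AE N in measure_pmf L. norm (S (1 / (real n + 1)) N) \<le> real N"
      by (auto simp: S_le S_nonneg field_simps)
  qed (use int in simp_all)
  have "c * pmf_mean L < pmf_mean L" using m c by simp
  then have "eventually (\<lambda>n. c * pmf_mean L < measure_pmf.expectation L (S (1 / (real n + 1)))) sequentially"
    using lim unfolding pmf_mean_def by (intro order_tendstoD(1)) auto
  then obtain n where n: "c * pmf_mean L < measure_pmf.expectation L (S (1 / (real n + 1)))"
    by (auto simp: eventually_sequentially)
  define \<delta> where "\<delta> = 1 / (real n + 1)"
  have d: "0 < \<delta>" "\<delta> \<le> 1" unfolding \<delta>_def by (auto simp: field_simps)
  have "\<forall>x. 0 < x \<and> x \<le> \<delta> \<longrightarrow> gf L (1 - x) \<le> 1 - c * pmf_mean L * x"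
  proof (intro allI impI)
    fix x :: real assume x: "0 < x \<and> x \<le> \<delta>"
    have iS: "\<And>z. 0 \<le> z \<Longrightarrow> z \<le> 1 \<Longrightarrow> integrable (measure_pmf L) (S z)"
      by (rule Bochner_Integration.integrable_bound[OF int]) (auto simp: S_le S_nonneg)
    have "measure_pmf.expectation L (S \<delta>) \<le> measure_pmf.expectation L (S x)"
      by (rule integral_mono) (use x d iS in \<open>auto intro: S_anti\<close>)
    then have lt: "c * pmf_mean L \<le> measure_pmf.expectation L (S x)" using n unfolding \<delta>_def by simp
    have "x * measure_pmf.expectation L (S x) = measure_pmf.expectation L (\<lambda>N. 1 - (1 - x) ^ N)"
      by (simp add: S_eq flip: integral_mult_right_zero)
    also have "\<dots> = 1 - gf L (1 - x)"
      unfolding gf_def using gf_int[of "1 - x" L] x d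
      by (simp add: Bochner_Integration.integral_diff measure_pmf.prob_space)
    finally have "1 - gf L (1 - x) = x * measure_pmf.expectation L (S x)" by simp
    moreover have "c * pmf_mean L * x \<le> x * measure_pmf.expectation L (S x)"
      using lt x by (simp add: mult.commute mult_left_mono)
    ultimately show "gf L (1 - x) \<le> 1 - c * pmf_mean L * x" by simp
  qed
  then show ?thesis using d by blast
qed

lemma beta0_support:
  fixes L :: "nat pmf"
  assumes "measure_pmf.prob L {N. 2 \<le> N} = 0"
  shows "set_pmf L \<subseteq> {0, 1}"
proof
  fix x assume x: "x \<in> set_pmf L"
  show "x \<in> {0, 1}"
  proof (rule ccontr)
    assume "x \<notin> {0, 1}"
    then have "{x} \<subseteq> {N. 2 \<le> N}" by auto
    then have "measure_pmf.prob L {x} \<le> measure_pmf.prob L {N. 2 \<le> N}"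
      by (rule measure_pmf.finite_measure_mono) simp
    then have "pmf L x \<le> 0" using assms by (simp add: measure_pmf_single)
    then show False using x by (simp add: set_pmf_iff pmf_nonneg order.antisym)
  qed
qed

lemma beta0_mean:
  fixes L :: "nat pmf"
  assumes "measure_pmf.prob L {N. 2 \<le> N} = 0"
  shows "pmf_mean L = pmf L 1"
proof -
  have "pmf_mean L = (\<Sum>a\<in>{0,1}. real a * pmf L a)"
    unfolding pmf_mean_def
    by (rule integral_measure_pmf_real) (use beta0_support[OF assms] in auto)
  then show ?thesis by simp
qed

lemma beta0_le1:
  fixes L :: "nat pmf"
  assumes "measure_pmf.prob L {N. 2 \<le> N} = 0"
  shows "pmf_mean L \<le> 1"
  using beta0_mean[OF assms] pmf_le_1 by simp

lemma beta0_return: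
  fixes L :: "nat pmf"
  assumes "measure_pmf.prob L {N. 2 \<le> N} = 0" "pmf_mean L = 1"
  shows "L = return_pmf 1"
proof -
  have sup: "set_pmf L \<subseteq> {0, 1}" by (rule beta0_support[OF assms(1)])
  have "(\<Sum>x\<in>{0,1::nat}. pmf L x) = 1" by (rule sum_pmf_eq_1) (use sup in auto)
  moreover have "pmf L 1 = 1" using beta0_mean[OF assms(1)] assms(2) by simp
  ultimately have "pmf L 0 = 0" by simp
  then have "set_pmf L \<subseteq> {1}" using sup by (auto simp: set_pmf_iff)
  then show ?thesis by (simp add: set_pmf_subset_singleton)
qed


lemma perron2:
  fixes a b c d :: real
  assumes pos: "0 < a" "0 < b" "0 < c" "0 < d"
    and cond: "a + d > min 2 (1 + (a * d - b * c))"
  shows "\<exists>v1 v2 r. 0 < v1 \<and> 0 < v2 \<and> 1 < r \<and> a * v1 + b * v2 = r * v1 \<and> c * v1 + d * v2 = r * v2"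
proof -
  define disc where "disc = (a - d)^2 + 4 * b * c"
  define s where "s = sqrt disc"
  define r where "r = (a + d + s) / 2"
  have dpos: "0 < disc"
  proof -
    have "0 < 4 * b * c" using pos by simp
    moreover have "0 \<le> (a - d)^2" by simp
    ultimately show ?thesis unfolding disc_def by linarith
  qed
  have s0: "0 \<le> s" unfolding s_def using less_imp_le[OF dpos] by simp
  have s2: "s^2 = disc" unfolding s_def using real_sqrt_pow2[OF less_imp_le[OF dpos]] .
  have "(d - a)^2 < s^2" using s2 pos unfolding disc_def by (simp add: power2_commute)
  then have "\<bar>d - a\<bar> < s" using s0 by (metis abs_ge_zero power2_abs power2_less_imp_less)
  then have v2: "0 < r - a" unfolding r_def by (simp add: field_simps abs_less_iff)
  have eq: "r * r - (a + d) * r + (a * d - b * c) = 0"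
  proof -
    have "r * r - (a + d) * r + (a * d - b * c) = (s^2 - (a + d)^2) / 4 + (a * d - b * c)"
      unfolding r_def by (simp add: field_simps power2_eq_square)
    also have "\<dots> = 0" using s2 unfolding disc_def by (simp add: field_simps power2_eq_square)
    finally show ?thesis .
  qed
  have r1: "1 < r"
  proof (cases "a + d > 2")
    case True then show ?thesis unfolding r_def using s0 by simp
  next
    case False
    then have t: "a + d > 1 + (a * d - b * c)" using cond by (simp add: min_def split: if_splits)
    have "(2 - (a + d))^2 < s^2"
    proof -
      have "(2 - (a + d))^2 = (a + d)^2 - 4 * (a + d) + 4" by (simp add: power2_eq_square algebra_simps)
      also have "\<dots> < (a + d)^2 - 4 * (a * d - b * c)" using t by simp
      also have "\<dots> = s^2" using s2 unfolding disc_def by (simp add: power2_eq_square algebra_simps)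
      finally show ?thesis .
    qed
    then have "2 - (a + d) < s" using s0 by (rule power2_less_imp_less)
    then show ?thesis unfolding r_def by simp
  qed
  have e1: "a * b + b * (r - a) = r * b" by (simp add: algebra_simps)
  have e2: "c * b + d * (r - a) = r * (r - a)" using eq by (simp add: algebra_simps)
  show ?thesis using e1 e2 v2 r1 pos by blast
qed

lemma sub2:
  fixes a b c d w1 w2 :: real
  assumes pos: "0 < a" "0 < b" "0 < c" "0 < d"
    and ncond: "\<not> (a + d > min 2 (1 + (a * d - b * c)))"
    and w: "0 \<le> w1" "0 \<le> w2" "w1 \<le> a * w1 + b * w2" "w2 \<le> c * w1 + d * w2"
  shows "(w1 = 0 \<and> w2 = 0) \<or> (0 < w1 \<and> 0 < w2 \<and> w1 = a * w1 + b * w2 \<and> w2 = c * w1 + d * w2)"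
proof -
  have t2: "a + d \<le> 2" and td: "a + d \<le> 1 + (a * d - b * c)" using ncond by (auto simp: min_def split: if_splits)
  define D where "D = (1 - a) * (1 - d) - b * c"
  have D0: "0 \<le> D" unfolding D_def using td by (simp add: algebra_simps)
  have bc: "0 < b * c" using pos by simp
  have pp: "0 < (1 - a) * (1 - d)" using D0 bc unfolding D_def by linarith
  have a1: "0 < 1 - a" and d1: "0 < 1 - d"
  proof -
    from pp have "(0 < 1 - a \<and> 0 < 1 - d) \<or> (1 - a < 0 \<and> 1 - d < 0)" by (simp add: zero_less_mult_iff)
    then show "0 < 1 - a" "0 < 1 - d" using t2 by auto
  qed
  have i1: "(1 - a) * w1 \<le> b * w2" using w(3) by (simp add: algebra_simps)
  have i2: "(1 - d) * w2 \<le> c * w1" using w(4) by (simp add: algebra_simps)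
  have j1: "(1 - d) * ((1 - a) * w1) \<le> (1 - d) * (b * w2)" using i1 d1 by (simp add: mult_left_mono)
  have j2: "b * ((1 - d) * w2) \<le> b * (c * w1)" using i2 pos by (simp add: mult_left_mono)
  have k: "D * w1 \<le> 0" using j1 j2 unfolding D_def by (simp add: algebra_simps)
  show ?thesis
  proof (cases "w1 = 0")
    case True
    then have "(1 - d) * w2 \<le> 0" using i2 by simp
    then have "w2 = 0" using d1 w(2) by (simp add: mult_le_0_iff)
    then show ?thesis using True by simp
  next
    case False
    then have w1p: "0 < w1" using w(1) by simp
    then have "D \<le> 0" using k by (simp add: mult_le_0_iff)
    then have DD: "D = 0" using D0 by simp
    have XW0: "(1 - d) * ((1 - a) * w1) - b * (c * w1) = D * w1" by (simp add: D_def algebra_simps)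
    have XW: "(1 - d) * ((1 - a) * w1) = b * (c * w1)" using XW0 DD by simp
    have YZ: "(1 - d) * (b * w2) = b * ((1 - d) * w2)" by (simp add: algebra_simps)
    have l1: "(1 - d) * ((1 - a) * w1) = (1 - d) * (b * w2)" using j1 j2 XW YZ by linarith
    have l2: "b * ((1 - d) * w2) = b * (c * w1)" using j1 j2 XW YZ by linarith
    have m1: "(1 - a) * w1 = b * w2" using l1 d1 by simp
    have m2: "(1 - d) * w2 = c * w1" using l2 pos by simp
    have "0 < c * w1" using pos w1p by simp
    then have "0 < w2" using m2 d1 w(2) by (metis less_eq_real_def mult_zero_right)
    then show ?thesis using w1p m1 m2 by (simp add: algebra_simps)
  qed
qed


lemma det_id:
  fixes M1 M2 m1 m2 p q :: real
  shows "(M1 * (1 - p) * (M2 * (1 - p)) + M1 * p * (m2 * q)) * (m1 * q * (M2 * p) + m1 * (1 - q) * (m2 * (1 - q)))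
       - (M1 * (1 - p) * (M2 * p) + M1 * p * (m2 * (1 - q))) * (m1 * q * (M2 * (1 - p)) + m1 * (1 - q) * (m2 * q))
       = M1 * M2 * m1 * m2 * (1 - p - q)^2"
  by (simp add: power2_eq_square algebra_simps)

lemma tr_id:
  fixes M1 M2 m1 m2 p q :: real
  shows "(M1 * (1 - p) * (M2 * (1 - p)) + M1 * p * (m2 * q)) + (m1 * q * (M2 * p) + m1 * (1 - q) * (m2 * (1 - q)))
       = M1 * M2 * (1 - p)^2 + (M1 * m2 + m1 * M2) * p * q + m1 * m2 * (1 - q)^2"
  by (simp add: power2_eq_square algebra_simps)

lemma all_one:
  fixes M1 M2 m1 m2 p q w1 w2 :: real
  assumes pq: "0 < p" "p < 1" "0 < q" "q < 1"
    and ms: "0 < M1" "M1 \<le> 1" "0 < M2" "M2 \<le> 1" "0 < m1" "m1 \<le> 1" "0 < m2" "m2 \<le> 1"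
    and w: "0 < w1" "0 < w2"
    and e1: "w1 = M1 * ((1 - p) * (M2 * ((1 - p) * w1 + p * w2)) + p * (m2 * (q * w1 + (1 - q) * w2)))"
    and e2: "w2 = m1 * (q * (M2 * ((1 - p) * w1 + p * w2)) + (1 - q) * (m2 * (q * w1 + (1 - q) * w2)))"
  shows "M1 = 1 \<and> M2 = 1 \<and> m1 = 1 \<and> m2 = 1"
proof -
  define s1 where "s1 = (1 - p) * M2 + p * m2"
  define s2 where "s2 = q * M2 + (1 - q) * m2"
  have s1le: "s1 \<le> 1"
  proof -
    have "(1 - p) * M2 \<le> (1 - p) * 1" by (rule mult_left_mono) (use pq ms in auto)
    moreover have "p * m2 \<le> p * 1" by (rule mult_left_mono) (use pq ms in auto)
    ultimately show ?thesis unfolding s1_def by simp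
  qed
  have s2le: "s2 \<le> 1"
  proof -
    have "q * M2 \<le> q * 1" by (rule mult_left_mono) (use pq ms in auto)
    moreover have "(1 - q) * m2 \<le> (1 - q) * 1" by (rule mult_left_mono) (use pq ms in auto)
    ultimately show ?thesis unfolding s2_def by simp
  qed
  have s1eq: "s1 = 1 \<Longrightarrow> M2 = 1 \<and> m2 = 1"
  proof -
    assume "s1 = 1"
    then have "(1 - p) * (1 - M2) + p * (1 - m2) = 0" unfolding s1_def by (simp add: algebra_simps)
    moreover have "0 \<le> (1 - p) * (1 - M2)" "0 \<le> p * (1 - m2)" using pq ms by simp_all
    ultimately have "(1 - p) * (1 - M2) = 0" "p * (1 - m2) = 0" by linarith+
    then show ?thesis using pq by simp
  qed
  have s2eq: "s2 = 1 \<Longrightarrow> M2 = 1 \<and> m2 = 1"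
  proof -
    assume "s2 = 1"
    then have "q * (1 - M2) + (1 - q) * (1 - m2) = 0" unfolding s2_def by (simp add: algebra_simps)
    moreover have "0 \<le> q * (1 - M2)" "0 \<le> (1 - q) * (1 - m2)" using pq ms by simp_all
    ultimately have "q * (1 - M2) = 0" "(1 - q) * (1 - m2) = 0" by linarith+
    then show ?thesis using pq by simp
  qed
  define a where "a = M1 * ((1 - p) * M2 * (1 - p) + p * m2 * q)"
  define b where "b = M1 * ((1 - p) * M2 * p + p * m2 * (1 - q))"
  define c where "c = m1 * (q * M2 * (1 - p) + (1 - q) * m2 * q)"
  define d where "d = m1 * (q * M2 * p + (1 - q) * m2 * (1 - q))"
  have E1: "w1 = a * w1 + b * w2" using e1 unfolding a_def b_def by (simp add: algebra_simps)
  have E2: "w2 = c * w1 + d * w2" using e2 unfolding c_def d_def by (simp add: algebra_simps)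
  have ab: "a + b = M1 * s1" unfolding a_def b_def s1_def by (simp add: algebra_simps)
  have cd: "c + d = m1 * s2" unfolding c_def d_def s2_def by (simp add: algebra_simps)
  have pos: "0 < a" "0 < b" "0 < c" "0 < d" unfolding a_def b_def c_def d_def using pq ms by (simp_all add: add_pos_pos)
  have s1pos: "0 < s1" unfolding s1_def using pq ms by (simp add: add_pos_pos)
  have s2pos: "0 < s2" unfolding s2_def using pq ms by (simp add: add_pos_pos)
  have M1s1: "M1 * s1 \<le> 1" using mult_mono[OF ms(2) s1le] ms less_imp_le[OF s1pos] by simp
  have m1s2: "m1 * s2 \<le> 1" using mult_mono[OF ms(6) s2le] ms less_imp_le[OF s2pos] by simp
  show ?thesis
  proof (cases "w2 \<le> w1")
    case True
    have "b * w2 \<le> b * w1" using True pos by (simp add: mult_left_mono)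
    then have "w1 \<le> (a + b) * w1" using E1 by (simp add: distrib_right)
    then have "1 \<le> a + b" using w by simp
    then have "M1 * s1 = 1" using ab M1s1 by simp
    then have "M1 = 1 \<and> s1 = 1"
      using mult_mono[OF ms(2) s1le] ms s1pos s1le by (metis mult_le_cancel_left1 mult_le_cancel_right1 order.antisym less_le_not_le)
    then have m: "M1 = 1" "M2 = 1" "m2 = 1" using s1eq by auto
    then have "a + b = 1" using ab s1_def by simp
    then have ab1: "a = 1 - b" by simp
    have "b * (w1 - w2) = 0" using E1[unfolded ab1] by (simp add: algebra_simps)
    then have "w1 = w2" using pos by simp
    then have "c + d = 1" using E2 w by (metis distrib_right mult_cancel_right2 less_irrefl)
    then have "m1 = 1" using cd m unfolding s2_def by simp
    then show ?thesis using m by simp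
  next
    case False
    have "c * w1 \<le> c * w2" using False pos by (simp add: mult_left_mono)
    then have "w2 \<le> (c + d) * w2" using E2 by (simp add: distrib_right)
    then have "1 \<le> c + d" using w by simp
    then have "m1 * s2 = 1" using cd m1s2 by simp
    then have "m1 = 1 \<and> s2 = 1"
      using ms s2pos s2le by (metis mult_le_cancel_left1 mult_le_cancel_right1 order.antisym less_le_not_le)
    then have m: "m1 = 1" "M2 = 1" "m2 = 1" using s2eq by auto
    then have "c + d = 1" using cd s2_def by simp
    then have cd1: "d = 1 - c" by simp
    have "c * (w2 - w1) = 0" using E2[unfolded cd1] by (simp add: algebra_simps)
    then have "w1 = w2" using pos by simp
    then have "a + b = 1" using E1 w by (metis distrib_right mult_cancel_right2 less_irrefl)
    then have "M1 = 1" using ab m unfolding s1_def by simp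
    then show ?thesis using m by simp
  qed
qed


definition le2 :: "real \<times> real \<Rightarrow> real \<times> real \<Rightarrow> bool" where
  "le2 s t \<longleftrightarrow> fst s \<le> fst t \<and> snd s \<le> snd t"

lemma lin_mono: fixes a x y x' y' :: real
  assumes "0 \<le> a" "a \<le> 1" "x \<le> x'" "y \<le> y'"
  shows "(1 - a) * x + a * y \<le> (1 - a) * x' + a * y'"
  using assms by (intro add_mono mult_left_mono) auto

lemma hv_mono:
  assumes pq: "0 \<le> p" "p \<le> 1" "0 \<le> q" "q \<le> 1" and s: "in01 s" "in01 t" "le2 s t"
  shows "le2 (hv L p q w s) (hv L p q w t)"
proof -
  have s': "0 \<le> fst s" "fst s \<le> 1" "0 \<le> snd s" "snd s \<le> 1" "0 \<le> fst t" "fst t \<le> 1" "0 \<le> snd t" "snd t \<le> 1"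
    "fst s \<le> fst t" "snd s \<le> snd t"
    using s unfolding in01_def le2_def by auto
  have a: "0 \<le> (1 - p) * fst s + p * snd s" "(1 - p) * fst s + p * snd s \<le> (1 - p) * fst t + p * snd t"
     "(1 - p) * fst t + p * snd t \<le> 1"
    using cvx01[of p "fst s" "snd s"] cvx01[of p "fst t" "snd t"] lin_mono[of p "fst s" "fst t" "snd s" "snd t"] pq s' by auto
  have b: "0 \<le> q * fst s + (1 - q) * snd s" "q * fst s + (1 - q) * snd s \<le> q * fst t + (1 - q) * snd t"
     "q * fst t + (1 - q) * snd t \<le> 1"
    using cvx01[of "1 - q" "fst s" "snd s"] cvx01[of "1 - q" "fst t" "snd t"] lin_mono[of "1 - q" "fst s" "fst t" "snd s" "snd t"] pq s' by auto
  show ?thesis unfolding le2_def hv_def using a b by (auto intro: gf_mono)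
qed

lemma Hn_mono:
  assumes pq: "0 \<le> p" "p \<le> 1" "0 \<le> q" "q \<le> 1" and s: "in01 s" "in01 t" "le2 s t"
  shows "le2 (Hn L p q env n s) (Hn L p q env n t)"
  using s
proof (induction n arbitrary: s t)
  case 0 then show ?case by simp
next
  case (Suc n)
  show ?case using Suc.IH[OF hv_in01[OF pq Suc.prems(1)] hv_in01[OF pq Suc.prems(2)] hv_mono[OF pq Suc.prems]] by simp
qed

lemma le2_trans: "le2 a b \<Longrightarrow> le2 b c \<Longrightarrow> le2 a c"
  unfolding le2_def by auto

lemma le2_refl: "le2 a a" unfolding le2_def by auto

context
  fixes L :: "nat \<Rightarrow> 'w \<Rightarrow> nat pmf" and e1 e2 :: 'w and p q :: real and env :: "nat \<Rightarrow> 'w"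
  assumes env: "env = (\<lambda>n::nat. if even n then e1 else e2)"
begin

definition FF :: "real \<times> real \<Rightarrow> real \<times> real" where
  "FF s = hv L p q e1 (hv L p q e2 s)"

lemma Hn_A: "Hn L p q env (2 * k + 2) s = Hn L p q env (2 * k) (FF s)"
proof -
  have "2 * k + 2 = Suc (Suc (2 * k))" by simp
  then show ?thesis by (simp add: env FF_def)
qed

lemma Hn_odd: "Hn L p q env (2 * k + 1) s = Hn L p q env (2 * k) (hv L p q e1 s)"
  by (simp add: env)

lemma Hn_B: "Hn L p q env (2 * k + 2) s = FF (Hn L p q env (2 * k) s)"
proof (induction k arbitrary: s)
  case 0 then show ?case using Hn_A[of 0 s] by simp
next
  case (Suc k)
  have "Hn L p q env (2 * Suc k + 2) s = Hn L p q env (2 * k + 2) (FF s)"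
    using Hn_A[of "Suc k" s] by simp
  also have "\<dots> = FF (Hn L p q env (2 * k) (FF s))" by (rule Suc.IH)
  also have "\<dots> = FF (Hn L p q env (2 * Suc k) s)" using Hn_A[of k s] by simp
  finally show ?case .
qed

lemma FF_in01: "0 \<le> p \<Longrightarrow> p \<le> 1 \<Longrightarrow> 0 \<le> q \<Longrightarrow> q \<le> 1 \<Longrightarrow> in01 s \<Longrightarrow> in01 (FF s)"
  unfolding FF_def by (intro hv_in01) auto

lemma FF_mono: "0 \<le> p \<Longrightarrow> p \<le> 1 \<Longrightarrow> 0 \<le> q \<Longrightarrow> q \<le> 1 \<Longrightarrow> in01 s \<Longrightarrow> in01 t \<Longrightarrow> le2 s t \<Longrightarrow> le2 (FF s) (FF t)"
  unfolding FF_def by (intro hv_mono hv_in01) auto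

lemma bound_all:
  assumes pq: "0 \<le> p" "p \<le> 1" "0 \<le> q" "q \<le> 1" and b: "in01 b" "le2 (FF b) b"
  shows "le2 (Hn L p q env n (0, 0)) b"
proof -
  have ev: "le2 (Hn L p q env (2 * k) s) b" if "in01 s" "le2 s b" for k s
    using that
  proof (induction k arbitrary: s)
    case 0 then show ?case by simp
  next
    case (Suc k)
    have "le2 (FF s) (FF b)" by (rule FF_mono[OF pq Suc.prems(1) b(1) Suc.prems(2)])
    then have "le2 (FF s) b" using b(2) by (rule le2_trans)
    then have "le2 (Hn L p q env (2 * k) (FF s)) b" by (intro Suc.IH FF_in01 pq Suc.prems)
    then show ?case using Hn_A[of k s] by simp
  qed
  have z: "in01 (0, 0)" by (simp add: in01_def)
  have zb: "le2 (0, 0) (hv L p q e2 b)" using hv_in01[OF pq b(1), of L e2] by (simp add: in01_def le2_def)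
  show ?thesis
  proof (cases "even n")
    case True
    then obtain k where "n = 2 * k" by auto
    then show ?thesis using ev[OF z] b(1) by (simp add: le2_def in01_def)
  next
    case False
    then obtain k where n: "n = 2 * k + 1" using oddE by blast
    have "le2 (hv L p q e1 (0, 0)) (FF b)"
      unfolding FF_def by (rule hv_mono[OF pq z hv_in01[OF pq b(1)] zb])
    then have "le2 (hv L p q e1 (0, 0)) b" using b(2) by (rule le2_trans)
    then show ?thesis using ev[OF hv_in01[OF pq z]] n Hn_odd by simp
  qed
qed

end


lemma hv_cont:
  fixes s :: "nat \<Rightarrow> real \<times> real"
  assumes pq: "0 \<le> p" "p \<le> 1" "0 \<le> q" "q \<le> 1"
    and l1: "(\<lambda>k. fst (s k)) \<longlonglongrightarrow> fst s0" and l2: "(\<lambda>k. snd (s k)) \<longlonglongrightarrow> snd s0"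
    and i: "\<And>k. in01 (s k)" "in01 s0"
  shows "(\<lambda>k. fst (hv L p q w (s k))) \<longlonglongrightarrow> fst (hv L p q w s0)"
    and "(\<lambda>k. snd (hv L p q w (s k))) \<longlonglongrightarrow> snd (hv L p q w s0)"
proof -
  have a: "\<And>k. 0 \<le> (1 - p) * fst (s k) + p * snd (s k)" "\<And>k. (1 - p) * fst (s k) + p * snd (s k) \<le> 1"
    using cvx01[of p] pq i(1) unfolding in01_def by auto
  have b: "\<And>k. 0 \<le> q * fst (s k) + (1 - q) * snd (s k)" "\<And>k. q * fst (s k) + (1 - q) * snd (s k) \<le> 1"
    using cvx01[of "1 - q"] pq i(1) unfolding in01_def by auto
  show "(\<lambda>k. fst (hv L p q w (s k))) \<longlonglongrightarrow> fst (hv L p q w s0)"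
    unfolding hv_def fst_conv
    by (rule gf_cont[OF _ a]) (intro tendsto_intros l1 l2)
  show "(\<lambda>k. snd (hv L p q w (s k))) \<longlonglongrightarrow> snd (hv L p q w s0)"
    unfolding hv_def snd_conv
    by (rule gf_cont[OF _ b]) (intro tendsto_intros l1 l2)
qed

context
  fixes L :: "nat \<Rightarrow> 'w \<Rightarrow> nat pmf" and e1 e2 :: 'w and p q :: real and env :: "nat \<Rightarrow> 'w"
  assumes env: "env = (\<lambda>n::nat. if even n then e1 else e2)"
begin

lemma limit_fixed:
  assumes pq: "0 \<le> p" "p \<le> 1" "0 \<le> q" "q \<le> 1"
  shows "\<exists>Q. in01 Q \<and> FF L e1 e2 p q Q = Q \<and>
     (\<lambda>k. fst (Hn L p q env (2 * k) (0, 0))) \<longlonglongrightarrow> fst Q \<and>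
     (\<lambda>k. snd (Hn L p q env (2 * k) (0, 0))) \<longlonglongrightarrow> snd Q"
proof -
  define X where "X k = Hn L p q env (2 * k) (0, 0)" for k
  have z: "in01 (0, 0)" by (simp add: in01_def)
  have Xi: "\<And>k. in01 (X k)" unfolding X_def by (rule Hn_in01[OF pq z])
  have step: "X (Suc k) = FF L e1 e2 p q (X k)" for k
    unfolding X_def using Hn_B[OF env, where L=L and p=p and q=q and k=k and s="(0,0)"] by (simp add: mult_2)
  have inc: "le2 (X k) (X (Suc k))" for k
  proof -
    have "X (Suc k) = Hn L p q env (2 * k) (FF L e1 e2 p q (0, 0))"
      unfolding X_def using Hn_A[OF env, where L=L and p=p and q=q and k=k and s="(0,0)"] by (simp add: mult_2)
    moreover have "le2 (0, 0) (FF L e1 e2 p q (0, 0))"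
      using FF_in01[OF env pq z, where L=L] by (simp add: in01_def le2_def)
    ultimately show ?thesis unfolding X_def
      using Hn_mono[OF pq z FF_in01[OF env pq z, where L=L]] by simp
  qed
  have i1: "incseq (\<lambda>k. fst (X k))" by (rule incseq_SucI) (use inc in \<open>auto simp: le2_def\<close>)
  have i2: "incseq (\<lambda>k. snd (X k))" by (rule incseq_SucI) (use inc in \<open>auto simp: le2_def\<close>)
  have b1: "bdd_above (range (\<lambda>k. fst (X k)))" using Xi unfolding in01_def by (auto intro: bdd_aboveI[where M=1])
  have b2: "bdd_above (range (\<lambda>k. snd (X k)))" using Xi unfolding in01_def by (auto intro: bdd_aboveI[where M=1])
  define Q where "Q = ((SUP k. fst (X k)), (SUP k. snd (X k)))"
  have l1: "(\<lambda>k. fst (X k)) \<longlonglongrightarrow> fst Q" unfolding Q_def using LIMSEQ_incseq_SUP[OF b1 i1] by simp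
  have l2: "(\<lambda>k. snd (X k)) \<longlonglongrightarrow> snd Q" unfolding Q_def using LIMSEQ_incseq_SUP[OF b2 i2] by simp
  have Qi: "in01 Q"
  proof -
    have "0 \<le> fst Q" by (rule LIMSEQ_le_const[OF l1]) (use Xi in \<open>auto simp: in01_def\<close>)
    moreover have "fst Q \<le> 1" by (rule LIMSEQ_le_const2[OF l1]) (use Xi in \<open>auto simp: in01_def\<close>)
    moreover have "0 \<le> snd Q" by (rule LIMSEQ_le_const[OF l2]) (use Xi in \<open>auto simp: in01_def\<close>)
    moreover have "snd Q \<le> 1" by (rule LIMSEQ_le_const2[OF l2]) (use Xi in \<open>auto simp: in01_def\<close>)
    ultimately show ?thesis by (simp add: in01_def)
  qed
  define Y where "Y k = hv L p q e2 (X k)" for k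
  have Yi: "\<And>k. in01 (Y k)" unfolding Y_def by (rule hv_in01[OF pq Xi])
  have Y1: "(\<lambda>k. fst (Y k)) \<longlonglongrightarrow> fst (hv L p q e2 Q)" unfolding Y_def by (rule hv_cont(1)[OF pq l1 l2 Xi Qi])
  have Y2: "(\<lambda>k. snd (Y k)) \<longlonglongrightarrow> snd (hv L p q e2 Q)" unfolding Y_def by (rule hv_cont(2)[OF pq l1 l2 Xi Qi])
  have FFY: "\<And>k. FF L e1 e2 p q (X k) = hv L p q e1 (Y k)" by (simp add: FF_def[OF env] Y_def)
  have FFQ: "FF L e1 e2 p q Q = hv L p q e1 (hv L p q e2 Q)" by (simp add: FF_def[OF env])
  have F1: "(\<lambda>k. fst (FF L e1 e2 p q (X k))) \<longlonglongrightarrow> fst (FF L e1 e2 p q Q)"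
    unfolding FFY FFQ by (rule hv_cont(1)[OF pq Y1 Y2 Yi hv_in01[OF pq Qi]])
  have F2: "(\<lambda>k. snd (FF L e1 e2 p q (X k))) \<longlonglongrightarrow> snd (FF L e1 e2 p q Q)"
    unfolding FFY FFQ by (rule hv_cont(2)[OF pq Y1 Y2 Yi hv_in01[OF pq Qi]])
  have "(\<lambda>k. fst (FF L e1 e2 p q (X k))) \<longlonglongrightarrow> fst Q"
    unfolding step[symmetric] using LIMSEQ_Suc[OF l1] .
  then have e1: "fst (FF L e1 e2 p q Q) = fst Q" using F1 LIMSEQ_unique by blast
  have "(\<lambda>k. snd (FF L e1 e2 p q (X k))) \<longlonglongrightarrow> snd Q"
    unfolding step[symmetric] using LIMSEQ_Suc[OF l2] .
  then have e2: "snd (FF L e1 e2 p q Q) = snd Q" using F2 LIMSEQ_unique by blast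
  have "FF L e1 e2 p q Q = Q" using e1 e2 by (simp add: prod_eq_iff)
  then show ?thesis using Qi l1 l2 unfolding X_def by blast
qed

end


lemma super_bound:
  fixes L :: "nat \<Rightarrow> 'w \<Rightarrow> nat pmf" and M1 M2 m1 m2 p q :: real
  assumes pq: "0 < p" "p < 1" "0 < q" "q < 1"
    and Ms: "M1 = pmf_mean (L 1 e1)" "M2 = pmf_mean (L 1 e2)" "m1 = pmf_mean (L 2 e1)" "m2 = pmf_mean (L 2 e2)"
    and int: "integrable (measure_pmf (L 1 e1)) real" "integrable (measure_pmf (L 1 e2)) real"
      "integrable (measure_pmf (L 2 e1)) real" "integrable (measure_pmf (L 2 e2)) real"
    and pos: "0 < M1" "0 < M2" "0 < m1" "0 < m2"
    and v: "0 < v1" "0 < v2" "1 < r"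
    and ev1: "M1 * ((1 - p) * (M2 * ((1 - p) * v1 + p * v2)) + p * (m2 * (q * v1 + (1 - q) * v2))) = r * v1"
    and ev2: "m1 * (q * (M2 * ((1 - p) * v1 + p * v2)) + (1 - q) * (m2 * (q * v1 + (1 - q) * v2))) = r * v2"
  shows "\<exists>b. in01 b \<and> le2 (FF L e1 e2 p q b) b \<and> fst b < 1 \<and> snd b < 1"
proof -
  define c0 where "c0 = (1 + r) / (2 * r)"
  have c01: "0 < c0" "c0 < 1" unfolding c0_def using v(3) by (auto simp: field_simps)
  have c02: "1 \<le> c0 * c0 * r"
  proof -
    have e: "c0 * c0 * r = (1 + r)^2 / (4 * r)" unfolding c0_def using v(3) by (simp add: field_simps power2_eq_square)
    have "(1 + r)^2 - 4 * r = (r - 1)^2" by (simp add: power2_eq_square algebra_simps)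
    moreover have "0 \<le> (r - 1)^2" by simp
    ultimately have "4 * r \<le> (1 + r)^2" by linarith
    then show ?thesis unfolding e using v(3) by (simp add: le_divide_eq)
  qed
  obtain d11 where d11: "0 < d11" "d11 \<le> 1" "\<And>x. 0 < x \<Longrightarrow> x \<le> d11 \<Longrightarrow> gf (L 1 e1) (1 - x) \<le> 1 - c0 * M1 * x"
    using gf_near1[OF int(1) pos(1)[unfolded Ms] c01(2)] Ms by blast
  obtain d12 where d12: "0 < d12" "d12 \<le> 1" "\<And>x. 0 < x \<Longrightarrow> x \<le> d12 \<Longrightarrow> gf (L 1 e2) (1 - x) \<le> 1 - c0 * M2 * x"
    using gf_near1[OF int(2) pos(2)[unfolded Ms] c01(2)] Ms by blast
  obtain d21 where d21: "0 < d21" "d21 \<le> 1" "\<And>x. 0 < x \<Longrightarrow> x \<le> d21 \<Longrightarrow> gf (L 2 e1) (1 - x) \<le> 1 - c0 * m1 * x"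
    using gf_near1[OF int(3) pos(3)[unfolded Ms] c01(2)] Ms by blast
  obtain d22 where d22: "0 < d22" "d22 \<le> 1" "\<And>x. 0 < x \<Longrightarrow> x \<le> d22 \<Longrightarrow> gf (L 2 e2) (1 - x) \<le> 1 - c0 * m2 * x"
    using gf_near1[OF int(4) pos(4)[unfolded Ms] c01(2)] Ms by blast
  define \<delta> where "\<delta> = min (min d11 d12) (min d21 d22)"
  have dl: "0 < \<delta>" "\<delta> \<le> 1" "\<delta> \<le> d11" "\<delta> \<le> d12" "\<delta> \<le> d21" "\<delta> \<le> d22"
    unfolding \<delta>_def using d11 d12 d21 d22 by auto
  define u1 where "u1 = (1 - p) * v1 + p * v2"
  define u2 where "u2 = q * v1 + (1 - q) * v2"
  define w1 where "w1 = M2 * u1"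
  define w2 where "w2 = m2 * u2"
  define z1 where "z1 = (1 - p) * w1 + p * w2"
  define z2 where "z2 = q * w1 + (1 - q) * w2"
  have P: "0 < u1" "0 < u2" "0 < w1" "0 < w2" "0 < z1" "0 < z2"
    unfolding z1_def z2_def w1_def w2_def u1_def u2_def using pq v pos by (simp_all add: add_pos_pos)
  have Ez1: "M1 * z1 = r * v1" using ev1 unfolding z1_def w1_def w2_def u1_def u2_def .
  have Ez2: "m1 * z2 = r * v2" using ev2 unfolding z2_def w1_def w2_def u1_def u2_def .
  define K where "K = 1 + v1 + v2 + u1 + u2 + w1 + w2 + z1 + z2"
  have Kp: "0 < K" unfolding K_def using P v by simp
  define t where "t = \<delta> / K"
  have tp: "0 < t" unfolding t_def using Kp dl by simp
  have tK: "\<And>X. 0 \<le> X \<Longrightarrow> X \<le> K \<Longrightarrow> t * X \<le> \<delta>"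
  proof -
    fix X :: real assume X: "0 \<le> X" "X \<le> K"
    have "t * X \<le> t * K" using X tp by (simp add: mult_left_mono)
    also have "\<dots> = \<delta>" unfolding t_def using Kp by simp
    finally show "t * X \<le> \<delta>" .
  qed
  have leK: "v1 \<le> K" "v2 \<le> K" "u1 \<le> K" "u2 \<le> K" "w1 \<le> K" "w2 \<le> K" "z1 \<le> K" "z2 \<le> K"
    unfolding K_def using P v by simp_all
  have tb: "t * v1 \<le> \<delta>" "t * v2 \<le> \<delta>" "t * u1 \<le> \<delta>" "t * u2 \<le> \<delta>"
     "t * w1 \<le> \<delta>" "t * w2 \<le> \<delta>" "t * z1 \<le> \<delta>" "t * z2 \<le> \<delta>"
    using tK leK P v by (meson less_imp_le)+
  have tc: "\<And>X. 0 < X \<Longrightarrow> t * X \<le> \<delta> \<Longrightarrow> 0 < t * c0 * X \<and> t * c0 * X \<le> \<delta>"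
  proof -
    fix X :: real assume X: "0 < X" "t * X \<le> \<delta>"
    have a: "t * c0 * X \<le> t * X" using c01 tp X by (simp add: mult_le_cancel_left1 mult.commute mult.left_commute mult_right_le_one_le)
    have p0: "0 < t * c0 * X" using X c01 tp by simp
    show "0 < t * c0 * X \<and> t * c0 * X \<le> \<delta>" using p0 a X(2) by (blast intro: order_trans)
  qed
  define b where "b = (1 - t * v1, 1 - t * v2)"
  define b' where "b' = (1 - t * c0 * w1, 1 - t * c0 * w2)"
  have bi: "in01 b" unfolding b_def in01_def using tb dl tp v by (simp add: less_imp_le)
  have b'i: "in01 b'" unfolding b'_def in01_def using tc[OF P(3) tb(5)] tc[OF P(4) tb(6)] dl by simp
  have h2b: "hv L p q e2 b = (gf (L 1 e2) (1 - t * u1), gf (L 2 e2) (1 - t * u2))"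
    unfolding hv_def b_def u1_def u2_def by (simp add: algebra_simps)
  have s1: "gf (L 1 e2) (1 - t * u1) \<le> 1 - t * c0 * w1"
    using d12(3)[of "t * u1"] tb(3) dl(4) tp P unfolding w1_def by (simp add: algebra_simps)
  have s2: "gf (L 2 e2) (1 - t * u2) \<le> 1 - t * c0 * w2"
    using d22(3)[of "t * u2"] tb(4) dl(6) tp P unfolding w2_def by (simp add: algebra_simps)
  have le1: "le2 (hv L p q e2 b) b'" unfolding h2b b'_def le2_def using s1 s2 by simp
  have pq': "0 \<le> p" "p \<le> 1" "0 \<le> q" "q \<le> 1" using pq by auto
  have le2': "le2 (FF L e1 e2 p q b) (hv L p q e1 b')"
    unfolding FF_def[OF refl] by (rule hv_mono[OF pq' hv_in01[OF pq' bi] b'i le1])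
  have h1b: "hv L p q e1 b' = (gf (L 1 e1) (1 - t * c0 * z1), gf (L 2 e1) (1 - t * c0 * z2))"
    unfolding hv_def b'_def z1_def z2_def by (simp add: algebra_simps)
  have r1: "gf (L 1 e1) (1 - t * c0 * z1) \<le> 1 - t * v1"
  proof -
    have "gf (L 1 e1) (1 - t * c0 * z1) \<le> 1 - c0 * M1 * (t * c0 * z1)"
      using d11(3)[of "t * c0 * z1"] tc[OF P(5) tb(7)] dl(3) by simp
    also have "\<dots> = 1 - t * (c0 * c0 * r) * v1" using Ez1 by (simp add: algebra_simps)
    also have "\<dots> \<le> 1 - t * v1" using c02 tp v by (simp add: mult_le_cancel_left1 mult_right_mono)
    finally show ?thesis .
  qed
  have r2: "gf (L 2 e1) (1 - t * c0 * z2) \<le> 1 - t * v2"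
  proof -
    have "gf (L 2 e1) (1 - t * c0 * z2) \<le> 1 - c0 * m1 * (t * c0 * z2)"
      using d21(3)[of "t * c0 * z2"] tc[OF P(6) tb(8)] dl(5) by simp
    also have "\<dots> = 1 - t * (c0 * c0 * r) * v2" using Ez2 by (simp add: algebra_simps)
    also have "\<dots> \<le> 1 - t * v2" using c02 tp v by (simp add: mult_le_cancel_left1 mult_right_mono)
    finally show ?thesis .
  qed
  have "le2 (hv L p q e1 b') b" unfolding h1b b_def le2_def using r1 r2 by simp
  then have "le2 (FF L e1 e2 p q b) b" using le2' le2_trans by blast
  moreover have "fst b < 1" "snd b < 1" unfolding b_def using tp v by simp_all
  ultimately show ?thesis using bi by blast
qed


lemma sub_fixed:
  fixes L :: "nat \<Rightarrow> 'w \<Rightarrow> nat pmf" and M1 M2 m1 m2 p q :: real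
  assumes pq: "0 < p" "p < 1" "0 < q" "q < 1"
    and Ms: "M1 = pmf_mean (L 1 e1)" "M2 = pmf_mean (L 1 e2)" "m1 = pmf_mean (L 2 e1)" "m2 = pmf_mean (L 2 e2)"
    and int: "integrable (measure_pmf (L 1 e1)) real" "integrable (measure_pmf (L 1 e2)) real"
      "integrable (measure_pmf (L 2 e1)) real" "integrable (measure_pmf (L 2 e2)) real"
    and pos: "0 < M1" "0 < M2" "0 < m1" "0 < m2"
    and ncond: "\<not> (M1 * ((1 - p) * M2 * (1 - p) + p * m2 * q) + m1 * (q * M2 * p + (1 - q) * m2 * (1 - q))
        > min 2 (1 + (M1 * ((1 - p) * M2 * (1 - p) + p * m2 * q) * (m1 * (q * M2 * p + (1 - q) * m2 * (1 - q)))
           - M1 * ((1 - p) * M2 * p + p * m2 * (1 - q)) * (m1 * (q * M2 * (1 - p) + (1 - q) * m2 * q)))))"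
    and notall: "\<not> (L 1 e1 = return_pmf 1 \<and> L 1 e2 = return_pmf 1 \<and> L 2 e1 = return_pmf 1 \<and> L 2 e2 = return_pmf 1)"
    and Q: "in01 Q" "FF L e1 e2 p q Q = Q"
  shows "Q = (1, 1)"
proof -
  have pq': "0 \<le> p" "p \<le> 1" "0 \<le> q" "q \<le> 1" using pq by auto
  define y where "y = hv L p q e2 Q"
  have yi: "in01 y" unfolding y_def by (rule hv_in01[OF pq' Q(1)])
  have Qs: "fst Q \<in> {0..1}" "snd Q \<in> {0..1}" using Q(1) unfolding in01_def by auto
  have ys: "fst y \<in> {0..1}" "snd y \<in> {0..1}" using yi unfolding in01_def by auto
  have FQ: "FF L e1 e2 p q Q = hv L p q e1 y" unfolding y_def by (simp add: FF_def[OF refl])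
  have Q1: "fst Q = gf (L 1 e1) ((1 - p) * fst y + p * snd y)" using Q(2) FQ by (metis fst_conv hv_def)
  have Q2: "snd Q = gf (L 2 e1) (q * fst y + (1 - q) * snd y)" using Q(2) FQ by (metis snd_conv hv_def)
  have y1: "fst y = gf (L 1 e2) ((1 - p) * fst Q + p * snd Q)" unfolding y_def hv_def by simp
  have y2: "snd y = gf (L 2 e2) (q * fst Q + (1 - q) * snd Q)" unfolding y_def hv_def by simp
  define W1 where "W1 = 1 - fst Q"
  define W2 where "W2 = 1 - snd Q"
  define Z1 where "Z1 = (1 - p) * W1 + p * W2"
  define Z2 where "Z2 = q * W1 + (1 - q) * W2"
  define Y1 where "Y1 = 1 - fst y"
  define Y2 where "Y2 = 1 - snd y"
  define R1 where "R1 = (1 - p) * Y1 + p * Y2"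
  define R2 where "R2 = q * Y1 + (1 - q) * Y2"
  define B11 where "B11 = measure_pmf.prob (L 1 e1) {N. 2 \<le> N}"
  define B12 where "B12 = measure_pmf.prob (L 1 e2) {N. 2 \<le> N}"
  define B21 where "B21 = measure_pmf.prob (L 2 e1) {N. 2 \<le> N}"
  define B22 where "B22 = measure_pmf.prob (L 2 e2) {N. 2 \<le> N}"
  have Bnn: "0 \<le> B11" "0 \<le> B12" "0 \<le> B21" "0 \<le> B22" unfolding B11_def B12_def B21_def B22_def by simp_all
  have Wnn: "0 \<le> W1" "0 \<le> W2" unfolding W1_def W2_def using Qs by auto
  have l1Q: "0 \<le> (1 - p) * fst Q + p * snd Q" "(1 - p) * fst Q + p * snd Q \<le> 1"
    using cvx01[of p "fst Q" "snd Q"] pq' Qs by auto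
  have l2Q: "0 \<le> q * fst Q + (1 - q) * snd Q" "q * fst Q + (1 - q) * snd Q \<le> 1"
    using cvx01[of "1 - q" "fst Q" "snd Q"] pq' Qs by auto
  have l1y: "0 \<le> (1 - p) * fst y + p * snd y" "(1 - p) * fst y + p * snd y \<le> 1"
    using cvx01[of p "fst y" "snd y"] pq' ys by auto
  have l2y: "0 \<le> q * fst y + (1 - q) * snd y" "q * fst y + (1 - q) * snd y \<le> 1"
    using cvx01[of "1 - q" "fst y" "snd y"] pq' ys by auto
  have g12: "B12 * Z1^2 \<le> M2 * Z1 - Y1"
    using gf_gap[OF int(2) l1Q] unfolding B12_def Ms(2)[symmetric] y1[symmetric] Y1_def Z1_def W1_def W2_def
    by (simp add: algebra_simps)
  have g22: "B22 * Z2^2 \<le> m2 * Z2 - Y2"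
    using gf_gap[OF int(4) l2Q] unfolding B22_def Ms(4)[symmetric] y2[symmetric] Y2_def Z2_def W1_def W2_def
    by (simp add: algebra_simps)
  have g11: "B11 * R1^2 \<le> M1 * R1 - W1"
    using gf_gap[OF int(1) l1y] unfolding B11_def Ms(1)[symmetric] Q1[symmetric] W1_def R1_def Y1_def Y2_def
    by (simp add: algebra_simps)
  have g21: "B21 * R2^2 \<le> m1 * R2 - W2"
    using gf_gap[OF int(3) l2y] unfolding B21_def Ms(3)[symmetric] Q2[symmetric] W2_def R2_def Y1_def Y2_def
    by (simp add: algebra_simps)
  define S1 where "S1 = (1 - p) * (M2 * Z1) + p * (m2 * Z2)"
  define S2 where "S2 = q * (M2 * Z1) + (1 - q) * (m2 * Z2)"
  define G1 where "G1 = (1 - p) * (B12 * Z1^2) + p * (B22 * Z2^2)"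
  define G2 where "G2 = q * (B12 * Z1^2) + (1 - q) * (B22 * Z2^2)"
  have Gnn: "0 \<le> G1" "0 \<le> G2" unfolding G1_def G2_def using Bnn pq' by simp_all
  have hR1: "R1 \<le> S1 - G1"
  proof -
    have "(1 - p) * Y1 \<le> (1 - p) * (M2 * Z1 - B12 * Z1^2)" using g12 pq' by (intro mult_left_mono) auto
    moreover have "p * Y2 \<le> p * (m2 * Z2 - B22 * Z2^2)" using g22 pq' by (intro mult_left_mono) auto
    ultimately show ?thesis unfolding R1_def S1_def G1_def by (simp add: algebra_simps)
  qed
  have hR2: "R2 \<le> S2 - G2"
  proof -
    have "q * Y1 \<le> q * (M2 * Z1 - B12 * Z1^2)" using g12 pq' by (intro mult_left_mono) auto
    moreover have "(1 - q) * Y2 \<le> (1 - q) * (m2 * Z2 - B22 * Z2^2)" using g22 pq' by (intro mult_left_mono) auto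
    ultimately show ?thesis unfolding R2_def S2_def G2_def by (simp add: algebra_simps)
  qed
  have hW1: "W1 + (M1 * G1 + B11 * R1^2) \<le> M1 * S1"
  proof -
    have "M1 * R1 \<le> M1 * (S1 - G1)" using hR1 pos by (intro mult_left_mono) auto
    then show ?thesis using g11 by (simp add: algebra_simps)
  qed
  have hW2: "W2 + (m1 * G2 + B21 * R2^2) \<le> m1 * S2"
  proof -
    have "m1 * R2 \<le> m1 * (S2 - G2)" using hR2 pos by (intro mult_left_mono) auto
    then show ?thesis using g21 by (simp add: algebra_simps)
  qed
  have nn1: "0 \<le> M1 * G1 + B11 * R1^2" using Gnn Bnn pos by simp
  have nn2: "0 \<le> m1 * G2 + B21 * R2^2" using Gnn Bnn pos by simp
  define a where "a = M1 * ((1 - p) * M2 * (1 - p) + p * m2 * q)"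
  define b where "b = M1 * ((1 - p) * M2 * p + p * m2 * (1 - q))"
  define c where "c = m1 * (q * M2 * (1 - p) + (1 - q) * m2 * q)"
  define d where "d = m1 * (q * M2 * p + (1 - q) * m2 * (1 - q))"
  have S1e: "M1 * S1 = a * W1 + b * W2" unfolding a_def b_def S1_def Z1_def Z2_def by (simp add: algebra_simps)
  have S2e: "m1 * S2 = c * W1 + d * W2" unfolding c_def d_def S2_def Z1_def Z2_def by (simp add: algebra_simps)
  have abcd: "0 < a" "0 < b" "0 < c" "0 < d" unfolding a_def b_def c_def d_def using pq pos by (simp_all add: add_pos_pos)
  have ineq1: "W1 \<le> a * W1 + b * W2" using hW1 nn1 S1e by linarith
  have ineq2: "W2 \<le> c * W1 + d * W2" using hW2 nn2 S2e by linarith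
  have nc: "\<not> (a + d > min 2 (1 + (a * d - b * c)))" using ncond unfolding a_def b_def c_def d_def by (simp add: mult.assoc)
  from sub2[OF abcd nc Wnn ineq1 ineq2]
  consider "W1 = 0 \<and> W2 = 0" | "0 < W1 \<and> 0 < W2 \<and> W1 = a * W1 + b * W2 \<and> W2 = c * W1 + d * W2" by blast
  then show ?thesis
  proof cases
    case 1 then show ?thesis unfolding W1_def W2_def by (simp add: prod_eq_iff)
  next
    case 2
    then have W: "0 < W1" "0 < W2" "W1 = a * W1 + b * W2" "W2 = c * W1 + d * W2" by auto
    have z1: "M1 * G1 + B11 * R1^2 = 0" using hW1 nn1 S1e W(3) by linarith
    have z2: "m1 * G2 + B21 * R2^2 = 0" using hW2 nn2 S2e W(4) by linarith
    have G10: "G1 = 0" and B11R: "B11 * R1^2 = 0"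
    proof -
      have "0 \<le> M1 * G1" "0 \<le> B11 * R1^2" using Gnn Bnn pos by simp_all
      then have "M1 * G1 = 0" "B11 * R1^2 = 0" using z1 by linarith+
      then show "G1 = 0" "B11 * R1^2 = 0" using pos by simp_all
    qed
    have G20: "G2 = 0" and B21R: "B21 * R2^2 = 0"
    proof -
      have "0 \<le> m1 * G2" "0 \<le> B21 * R2^2" using Gnn Bnn pos by simp_all
      then have "m1 * G2 = 0" "B21 * R2^2 = 0" using z2 by linarith+
      then show "G2 = 0" "B21 * R2^2 = 0" using pos by simp_all
    qed
    have Zp: "0 < Z1" "0 < Z2" unfolding Z1_def Z2_def using W pq by (simp_all add: add_pos_pos)
    have "0 \<le> (1 - p) * (B12 * Z1^2)" "0 \<le> p * (B22 * Z2^2)" using Bnn pq' by simp_all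
    then have "(1 - p) * (B12 * Z1^2) = 0" "p * (B22 * Z2^2) = 0" using G10 unfolding G1_def by linarith+
    then have B12z: "B12 = 0" and B22z: "B22 = 0" using pq Zp by simp_all
    have "0 < M1 * R1" using g11 W(1) Bnn by (smt (verit) zero_le_power2 mult_nonneg_nonneg)
    then have "0 < R1" using pos by (simp add: zero_less_mult_iff)
    then have B11z: "B11 = 0" using B11R by simp
    have "0 < m1 * R2" using g21 W(2) Bnn by (smt (verit) zero_le_power2 mult_nonneg_nonneg)
    then have "0 < R2" using pos by (simp add: zero_less_mult_iff)
    then have B21z: "B21 = 0" using B21R by simp
    have le: "M1 \<le> 1" "M2 \<le> 1" "m1 \<le> 1" "m2 \<le> 1"
      using beta0_le1[of "L 1 e1"] beta0_le1[of "L 1 e2"] beta0_le1[of "L 2 e1"] beta0_le1[of "L 2 e2"]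
        B11z B12z B21z B22z unfolding B11_def B12_def B21_def B22_def Ms by auto
    have e1': "W1 = M1 * ((1 - p) * (M2 * ((1 - p) * W1 + p * W2)) + p * (m2 * (q * W1 + (1 - q) * W2)))"
      using W(3) unfolding a_def b_def by (simp add: algebra_simps)
    have e2': "W2 = m1 * (q * (M2 * ((1 - p) * W1 + p * W2)) + (1 - q) * (m2 * (q * W1 + (1 - q) * W2)))"
      using W(4) unfolding c_def d_def by (simp add: algebra_simps)
    have ones: "M1 = 1 \<and> M2 = 1 \<and> m1 = 1 \<and> m2 = 1"
      by (rule all_one[OF pq pos(1) le(1) pos(2) le(2) pos(3) le(3) pos(4) le(4) W(1,2) e1' e2'])
    have "L 1 e1 = return_pmf 1" using beta0_return[of "L 1 e1"] B11z ones unfolding B11_def Ms by auto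
    moreover have "L 1 e2 = return_pmf 1" using beta0_return[of "L 1 e2"] B12z ones unfolding B12_def Ms by auto
    moreover have "L 2 e1 = return_pmf 1" using beta0_return[of "L 2 e1"] B21z ones unfolding B21_def Ms by auto
    moreover have "L 2 e2 = return_pmf 1" using beta0_return[of "L 2 e2"] B22z ones unfolding B22_def Ms by auto
    ultimately show ?thesis using notall by blast
  qed
qed


theorem theorem5p1:
  fixes L :: "nat \<Rightarrow> 'w \<Rightarrow> nat pmf" and e1 e2 :: 'w and p q :: real
  defines "env \<equiv> (\<lambda>n::nat. if even n then e1 else e2)"
  defines "M1 \<equiv> pmf_mean (L 1 e1)" and "M2 \<equiv> pmf_mean (L 1 e2)"
      and "m1 \<equiv> pmf_mean (L 2 e1)" and "m2 \<equiv> pmf_mean (L 2 e2)"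
  assumes "0 < p" "p < 1" "0 < q" "q < 1"
    and "\<And>i w. i \<in> {1, 2} \<Longrightarrow> w \<in> {e1, e2} \<Longrightarrow> integrable (measure_pmf (L i w)) real"
    and "M1 > 0" "M2 > 0" "m1 > 0" "m2 > 0"
    and "\<not> (\<forall>i\<in>{1::nat, 2}. \<forall>w\<in>{e1, e2}. L i w = return_pmf 1)"
  shows "(persists L p q env (1, 0) \<longleftrightarrow>
            M1 * M2 * (1 - p)^2 + (M1 * m2 + m1 * M2) * p * q + m1 * m2 * (1 - q)^2
              > min 2 (1 + M1 * M2 * m1 * m2 * (1 - p - q)^2))
       \<and> (persists L p q env (0, 1) \<longleftrightarrow>
            M1 * M2 * (1 - p)^2 + (M1 * m2 + m1 * M2) * p * q + m1 * m2 * (1 - q)^2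
              > min 2 (1 + M1 * M2 * m1 * m2 * (1 - p - q)^2))"
proof -
  have pq: "0 < p" "p < 1" "0 < q" "q < 1" using assms(6-9) by auto
  have pq': "0 \<le> p" "p \<le> 1" "0 \<le> q" "q \<le> 1" using pq by auto
  have Ms: "M1 = pmf_mean (L 1 e1)" "M2 = pmf_mean (L 1 e2)" "m1 = pmf_mean (L 2 e1)" "m2 = pmf_mean (L 2 e2)"
    using assms(2-5) by simp_all
  have int: "integrable (measure_pmf (L 1 e1)) real" "integrable (measure_pmf (L 1 e2)) real"
      "integrable (measure_pmf (L 2 e1)) real" "integrable (measure_pmf (L 2 e2)) real"
    using assms(10) by auto
  have pos: "0 < M1" "0 < M2" "0 < m1" "0 < m2" using assms(11-14) by auto
  have notall: "\<not> (L 1 e1 = return_pmf 1 \<and> L 1 e2 = return_pmf 1 \<and> L 2 e1 = return_pmf 1 \<and> L 2 e2 = return_pmf 1)"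
    using assms(15) by auto
  have envd: "env = (\<lambda>n::nat. if even n then e1 else e2)" using assms(1) by simp
  define a where "a = M1 * ((1 - p) * M2 * (1 - p) + p * m2 * q)"
  define b where "b = M1 * ((1 - p) * M2 * p + p * m2 * (1 - q))"
  define c where "c = m1 * (q * M2 * (1 - p) + (1 - q) * m2 * q)"
  define d where "d = m1 * (q * M2 * p + (1 - q) * m2 * (1 - q))"
  have tr: "a + d = M1 * M2 * (1 - p)^2 + (M1 * m2 + m1 * M2) * p * q + m1 * m2 * (1 - q)^2"
    unfolding a_def d_def by (simp add: power2_eq_square algebra_simps)
  have dt: "a * d - b * c = M1 * M2 * m1 * m2 * (1 - p - q)^2"
    unfolding a_def b_def c_def d_def by (simp add: power2_eq_square algebra_simps)
  have abcd: "0 < a" "0 < b" "0 < c" "0 < d" unfolding a_def b_def c_def d_def using pq pos by (simp_all add: add_pos_pos)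
  let ?C = "M1 * M2 * (1 - p)^2 + (M1 * m2 + m1 * M2) * p * q + m1 * m2 * (1 - q)^2
              > min 2 (1 + M1 * M2 * m1 * m2 * (1 - p - q)^2)"
  have Ceq: "?C \<longleftrightarrow> a + d > min 2 (1 + (a * d - b * c))" unfolding tr dt ..
  have prob1: "\<And>n. measure_pmf.prob (popZ L p q env (1, 0) n) {z. z \<noteq> (0, 0)} = 1 - fst (Hn L p q env n (0, 0))"
    using prob_popZ[OF pq', of L env "(1,0)"] by simp
  have prob2: "\<And>n. measure_pmf.prob (popZ L p q env (0, 1) n) {z. z \<noteq> (0, 0)} = 1 - snd (Hn L p q env n (0, 0))"
    using prob_popZ[OF pq', of L env "(0,1)"] by simp
  have pers: "persists L p q env (1, 0) \<and> persists L p q env (0, 1)" if C: ?C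
  proof -
    obtain v1 v2 r where v: "0 < v1" "0 < v2" "1 < r" "a * v1 + b * v2 = r * v1" "c * v1 + d * v2 = r * v2"
      using perron2[OF abcd] C Ceq by blast
    have ev1: "M1 * ((1 - p) * (M2 * ((1 - p) * v1 + p * v2)) + p * (m2 * (q * v1 + (1 - q) * v2))) = r * v1"
      using v(4) unfolding a_def b_def by (simp add: algebra_simps)
    have ev2: "m1 * (q * (M2 * ((1 - p) * v1 + p * v2)) + (1 - q) * (m2 * (q * v1 + (1 - q) * v2))) = r * v2"
      using v(5) unfolding c_def d_def by (simp add: algebra_simps)
    obtain bb where bb: "in01 bb" "le2 (FF L e1 e2 p q bb) bb" "fst bb < 1" "snd bb < 1"
      using super_bound[OF pq Ms int pos v(1-3) ev1 ev2] by blast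
    have all: "\<And>n. le2 (Hn L p q env n (0, 0)) bb" by (rule bound_all[OF envd pq' bb(1,2)])
    have "persists L p q env (1, 0)" unfolding persists_def
    proof (intro exI[of _ "1 - fst bb"] conjI allI)
      show "0 < 1 - fst bb" using bb by simp
      fix n show "1 - fst bb \<le> measure_pmf.prob (popZ L p q env (1, 0) n) {z. z \<noteq> (0, 0)}"
        using all[of n] unfolding prob1 le2_def by simp
    qed
    moreover have "persists L p q env (0, 1)" unfolding persists_def
    proof (intro exI[of _ "1 - snd bb"] conjI allI)
      show "0 < 1 - snd bb" using bb by simp
      fix n show "1 - snd bb \<le> measure_pmf.prob (popZ L p q env (0, 1) n) {z. z \<noteq> (0, 0)}"
        using all[of n] unfolding prob2 le2_def by simp
    qed
    ultimately show ?thesis by simp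
  qed
  have npers: "\<not> persists L p q env (1, 0) \<and> \<not> persists L p q env (0, 1)" if nC: "\<not> ?C"
  proof -
    obtain Q where Q: "in01 Q" "FF L e1 e2 p q Q = Q"
      "(\<lambda>k. fst (Hn L p q env (2 * k) (0, 0))) \<longlonglongrightarrow> fst Q"
      "(\<lambda>k. snd (Hn L p q env (2 * k) (0, 0))) \<longlonglongrightarrow> snd Q"
      using limit_fixed[OF envd pq'] by blast
    have nc: "\<not> (M1 * ((1 - p) * M2 * (1 - p) + p * m2 * q) + m1 * (q * M2 * p + (1 - q) * m2 * (1 - q))
        > min 2 (1 + (M1 * ((1 - p) * M2 * (1 - p) + p * m2 * q) * (m1 * (q * M2 * p + (1 - q) * m2 * (1 - q)))
           - M1 * ((1 - p) * M2 * p + p * m2 * (1 - q)) * (m1 * (q * M2 * (1 - p) + (1 - q) * m2 * q)))))"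
      using nC Ceq unfolding a_def b_def c_def d_def by simp
    have Q1: "Q = (1, 1)" by (rule sub_fixed[OF pq Ms int pos nc notall Q(1,2)])
    have l1: "(\<lambda>k. fst (Hn L p q env (2 * k) (0, 0))) \<longlonglongrightarrow> 1" using Q(3) Q1 by simp
    have l2: "(\<lambda>k. snd (Hn L p q env (2 * k) (0, 0))) \<longlonglongrightarrow> 1" using Q(4) Q1 by simp
    have "\<not> persists L p q env (1, 0)"
    proof
      assume "persists L p q env (1, 0)"
      then obtain c0 where c0: "0 < c0" "\<And>n. c0 \<le> 1 - fst (Hn L p q env n (0, 0))"
        unfolding persists_def prob1 by blast
      have h: "fst (Hn L p q env n (0, 0)) \<le> 1 - c0" for n using c0(2)[of n] by linarith
      have "1 \<le> 1 - c0" by (rule LIMSEQ_le_const2[OF l1]) (use h in blast)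
      then show False using c0 by simp
    qed
    moreover have "\<not> persists L p q env (0, 1)"
    proof
      assume "persists L p q env (0, 1)"
      then obtain c0 where c0: "0 < c0" "\<And>n. c0 \<le> 1 - snd (Hn L p q env n (0, 0))"
        unfolding persists_def prob2 by blast
      have h: "snd (Hn L p q env n (0, 0)) \<le> 1 - c0" for n using c0(2)[of n] by linarith
      have "1 \<le> 1 - c0" by (rule LIMSEQ_le_const2[OF l2]) (use h in blast)
      then show False using c0 by simp
    qed
    ultimately show ?thesis by simp
  qed
  show ?thesis using pers npers by blast
qed

end
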